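(* Let $p\in(0,1)$. Then \[\lim_{n\to\infty}\mathrm d_{\mathrm H}\big(\mathbf R^{(p)}_{\gamma^{(n)}},\mathbf R^{(p)}_\infty\big)=0,\qquad\text{where}\quad \mathbf R^{(p)}_\infty=\{(x,y)\in\mathbb R^2:\ y\le0\le x,\ \sqrt{(1-p)x}+\sqrt{-y}\le(6(1-p))^{1/4}\}.\]
   Context: For $n\ge2$ let $\gamma^{(n)}=(\gamma^{(n)}_1,\dots,\gamma^{(n)}_n)=\sum_{1\le i<j\le n}\widehat E_{j,i}(e_i-e_j)\in\mathbb R^n$, where $e_i$ are standard basis vectors and $\widehat E_{j,i}=\frac{(j-i)(2n-(i+j-1)p)}{(n-ip)(n-(i-1)p)(n-jp)(n-(j-1)p)}$. For a vector $\beta=(\beta_1,\dots,\beta_n)$ with $\beta_1\ge\cdots\ge\beta_n$, $\beta\ne0$, $\sum\beta_i=0$, put $h(i)=\beta_i-\beta_{i+1}$ ($1\le i\le n-1$) and $\mathbf r_k=\big(\sum_{i=1}^{k-1}ih(i),\,-\sum_{i=k}^{n-1}(n-i)h(i)\big)\in\mathbb R^2$ for $k\in[n]$. Let $\mathring{\mathbf R}^{(p)}_\beta$ be the region bounded by the coordinate axes and the polygonal curve $\bigcup_{k=1}^{n-1}[\mathbf r_k,\mathbf r_{k+1}]$ (segments $[\mathbf r,\mathbf r']$), of area $\mathrm A_\beta$, and $\mathbf R^{(p)}_\beta=\mathrm A_\beta^{-1/2}\mathring{\mathbf R}^{(p)}_\beta$. $\mathrm d_{\mathrm H}$ denotes Hausdorff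 distance. *)

theory Defs
  imports "HOL-Analysis.Analysis"
begin

definition hausdorff_dist :: "'a::metric_space set \<Rightarrow> 'a set \<Rightarrow> real" where
  "hausdorff_dist S T = max (SUP x\<in>S. infdist x T) (SUP y\<in>T. infdist y S)"

definition Ehat :: "nat \<Rightarrow> real \<Rightarrow> nat \<Rightarrow> nat \<Rightarrow> real" where
  "Ehat n p j i =
     (real j - real i) * (2 * real n - (real i + real j - 1) * p) /
     ((real n - real i * p) * (real n - (real i - 1) * p) *
      (real n - real j * p) * (real n - (real j - 1) * p))"

definition stdbasis :: "nat \<Rightarrow> nat \<Rightarrow> real" where
  "stdbasis i k = (if k = i then 1 else 0)"

text \<open>gamma^(n) as a vector indexed by {1..n} (values outside are irrelevant/zero).\<close>
definition gammavec :: "nat \<Rightarrow> real \<Rightarrow> nat \<Rightarrow> real" where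
  "gammavec n p = (\<lambda>k. \<Sum>(i,j)\<in>{(i,j). 1 \<le> i \<and> i < j \<and> j \<le> n}.
                         Ehat n p j i * (stdbasis i k - stdbasis j k))"

definition hgap :: "(nat \<Rightarrow> real) \<Rightarrow> nat \<Rightarrow> real" where
  "hgap \<beta> i = \<beta> i - \<beta> (i + 1)"

definition rpt :: "nat \<Rightarrow> (nat \<Rightarrow> real) \<Rightarrow> nat \<Rightarrow> real \<times> real" where
  "rpt n \<beta> k = ((\<Sum>i\<in>{1..<k}. real i * hgap \<beta> i),
                 - (\<Sum>i\<in>{k..<n}. (real n - real i) * hgap \<beta> i))"

text \<open>The closed curve formed by the coordinate axes (segments from the origin to r_1 and
  from r_n to the origin) and the polygonal curve through r_1, ..., r_n.\<close>
definition boundary_curve :: "nat \<Rightarrow> (nat \<Rightarrow> real) \<Rightarrow> (real \<times> real) set" where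
  "boundary_curve n \<beta> =
     closed_segment 0 (rpt n \<beta> 1) \<union>
     (\<Union>k\<in>{1..<n}. closed_segment (rpt n \<beta> k) (rpt n \<beta> (k + 1))) \<union>
     closed_segment (rpt n \<beta> n) 0"

definition Rring :: "nat \<Rightarrow> (nat \<Rightarrow> real) \<Rightarrow> (real \<times> real) set" where
  "Rring n \<beta> = boundary_curve n \<beta> \<union> inside (boundary_curve n \<beta>)"

definition Area :: "nat \<Rightarrow> (nat \<Rightarrow> real) \<Rightarrow> real" where
  "Area n \<beta> = measure lebesgue (Rring n \<beta>)"

definition Rnorm :: "nat \<Rightarrow> (nat \<Rightarrow> real) \<Rightarrow> (real \<times> real) set" where
  "Rnorm n \<beta> = (\<lambda>z. (1 / sqrt (Area n \<beta>)) *\<^sub>R z) ` Rring n \<beta>"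

definition Rinf :: "real \<Rightarrow> (real \<times> real) set" where
  "Rinf p = {(x, y). y \<le> 0 \<and> 0 \<le> x \<and>
              sqrt ((1 - p) * x) + sqrt (- y) \<le> (6 * (1 - p)) powr (1/4)}"

end

theory Submission
  imports Defs
begin


definition KK :: "real \<Rightarrow> real \<Rightarrow> (real \<times> real) set" where
  "KK a t = {(x, y). y \<le> 0 \<and> 0 \<le> x \<and> sqrt (a * x) + sqrt (- y) \<le> t}"

lemma closed_KK: "closed (KK a t)"
proof -
  have "KK a t = {z. snd z \<le> 0} \<inter> {z. 0 \<le> fst z} \<inter> {z. sqrt (a * fst z) + sqrt (- snd z) \<le> t}"
    by (auto simp: KK_def)
  also have "closed \<dots>"
    by (intro closed_Int closed_Collect_le continuous_intros)
  finally show ?thesis .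
qed

lemma KK_bound: assumes "a > 0" "z \<in> KK a t" shows "norm z \<le> t^2 / a + t^2"
proof -
  obtain x y where z: "z = (x,y)" "y \<le> 0" "0 \<le> x" "sqrt (a*x) + sqrt (-y) \<le> t"
    using assms(2) by (auto simp: KK_def)
  have "sqrt (a*x) \<ge> 0" "sqrt (-y) \<ge> 0" using z assms by auto
  hence s1: "sqrt (a*x) \<le> t" "sqrt (-y) \<le> t" using z by linarith+
  have "a * x \<le> t^2" using sqrt_le_D[OF s1(1)] .
  hence "x \<le> t^2/a" using assms by (simp add: pos_le_divide_eq mult.commute)
  moreover have "-y \<le> t^2" using sqrt_le_D[OF s1(2)] .
  moreover have "norm z \<le> \<bar>x\<bar> + \<bar>y\<bar>" using z norm_Pair_le[of x y] by simp
  ultimately show ?thesis using z by simp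
qed

lemma bounded_KK: assumes "a > 0" shows "bounded (KK a t)"
  using KK_bound[OF assms] unfolding bounded_iff by blast

lemma slice_KK:
  assumes "a > 0" "t \<ge> 0"
  shows "Pair x -` KK a t = (if 0 \<le> x \<and> x \<le> t^2/a then {(- ((t - sqrt (a*x))^2)) .. 0} else {})"
proof (cases "0 \<le> x \<and> x \<le> t^2/a")
  case True
  hence "a*x \<le> t^2" using assms by (simp add: pos_le_divide_eq mult.commute)
  hence st: "sqrt (a*x) \<le> t" using assms real_le_lsqrt by blast
  have iff: "(y \<le> 0 \<and> sqrt (a*x) + sqrt (-y) \<le> t) = (- ((t - sqrt (a*x))^2) \<le> y \<and> y \<le> 0)" for y
  proof -
    have 1: "sqrt (-y) \<le> t - sqrt (a*x) \<Longrightarrow> -y \<le> (t - sqrt (a*x))^2" by (rule sqrt_le_D)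
    have 2: "-y \<le> (t - sqrt (a*x))^2 \<Longrightarrow> sqrt (-y) \<le> t - sqrt (a*x)"
      by (rule real_le_lsqrt) (use st in simp_all)
    show ?thesis using 1 2 by linarith
  qed
  show ?thesis
  proof (rule set_eqI)
    fix y
    have "y \<in> Pair x -` KK a t \<longleftrightarrow> (y \<le> 0 \<and> sqrt (a*x) + sqrt (-y) \<le> t)"
      using True unfolding KK_def by simp
    also have "\<dots> \<longleftrightarrow> y \<in> {(- ((t - sqrt (a*x))^2)) .. 0}" unfolding iff by simp
    finally show "y \<in> Pair x -` KK a t \<longleftrightarrow> y \<in> (if 0 \<le> x \<and> x \<le> t^2/a then {(- ((t - sqrt (a*x))^2)) .. 0} else {})"
      using True by simp
  qed
next
  case False
  { fix y assume "(x,y) \<in> KK a t"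
    hence "0 \<le> x" "sqrt (a*x) + sqrt (-y) \<le> t" "y \<le> 0" unfolding KK_def by simp_all
    hence "0 \<le> x" "sqrt (a*x) \<le> t" using real_sqrt_ge_zero[of "-y"] by linarith+
    hence "a*x \<le> t^2" using sqrt_le_D by blast
    hence False using False \<open>0 \<le> x\<close> assms by (simp add: pos_le_divide_eq mult.commute) }
  thus ?thesis using False by auto
qed

lemma integral_KK:
  assumes "a > 0" "t \<ge> 0"
  shows "((\<lambda>x. (t - sqrt (a*x))^2) has_integral t^4/(6*a)) {0..t^2/a}"
proof -
  define G where "G x = t^2*x - (4/3) * t * sqrt a * (x * sqrt x) + a*x^2/2" for x
  have "((\<lambda>x. (t - sqrt (a*x))^2) has_integral G (t^2/a) - G 0) {0..t^2/a}"
  proof (rule fundamental_theorem_of_calculus_interior)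
    show "0 \<le> t^2/a" using assms by simp
    show "continuous_on {0..t^2/a} G" unfolding G_def by (intro continuous_intros) auto
    fix x assume x: "x \<in> {0<..<t^2/a}"
    have "(G has_real_derivative (t^2 - (4/3) * t * sqrt a*(sqrt x + x * (inverse (sqrt x) / 2)) + a*x)) (at x)"
      unfolding G_def using x
      by (auto intro!: derivative_eq_intros)
    moreover have "t^2 - (4/3) * t * sqrt a*(sqrt x + x * (inverse (sqrt x) / 2)) + a*x = (t - sqrt (a*x))^2"
    proof -
      have sx: "sqrt x > 0" using x by auto
      have xx: "x = sqrt x * sqrt x" using x by simp
      have "x * (inverse (sqrt x) / 2) = sqrt x / 2" using sx by (subst xx) (simp add: field_simps)
      moreover have "sqrt (a*x) = sqrt a * sqrt x" by (simp add: real_sqrt_mult)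
      moreover have "a = sqrt a * sqrt a" using assms by simp
      ultimately show ?thesis using sx
        by (simp add: power2_eq_square algebra_simps)
    qed
    ultimately show "(G has_vector_derivative (t - sqrt (a*x))^2) (at x)"
      by (simp add: has_real_derivative_iff_has_vector_derivative)
  qed
  moreover have "G (t^2/a) - G 0 = t^4/(6*a)"
  proof -
    have "sqrt (t^2/a) = t / sqrt a" using assms by (simp add: real_sqrt_divide)
    moreover have "a = sqrt a * sqrt a" using assms by simp
    ultimately have "sqrt a * (t^2/a * sqrt (t^2/a)) = t^3 / a"
      using assms by (simp add: field_simps power2_eq_square power3_eq_cube)
    hence e: "(4/3) * t * sqrt a * (t^2/a * sqrt (t^2/a)) = (4/3) * t * (t^3/a)"
      by (metis mult.assoc)
    have "G (t^2/a) = t^2*(t^2/a) - (4/3) * t * (t^3/a) + a*(t^2/a)^2/2"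
      unfolding G_def e ..
    also have "\<dots> = t^4/a - (4/3)*t^4/a + t^4/(2*a)"
      using assms by (simp add: field_simps power2_eq_square power3_eq_cube power4_eq_xxxx)
    finally have "G (t^2/a) = t^4/a - (4/3)*t^4/a + t^4/(2*a)" .
    thus ?thesis unfolding G_def by (simp add: field_simps)
  qed
  ultimately show ?thesis by simp
qed

lemma measure_KK:
  assumes "a > 0" "t \<ge> 0"
  shows "measure lebesgue (KK a t) = t^4/(6*a)" "KK a t \<in> lmeasurable"
proof -
  have B: "KK a t \<in> sets lborel" using closed_KK by simp
  have "emeasure lborel (KK a t) = emeasure (lborel \<Otimes>\<^sub>M lborel) (KK a t)"
    by (simp only: lborel_prod)
  also have "\<dots> = (\<integral>\<^sup>+x. emeasure lborel (Pair x -` KK a t) \<partial>lborel)"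
    by (rule lborel.emeasure_pair_measure_alt) (subst lborel_prod, rule B)
  also have "\<dots> = (\<integral>\<^sup>+x. ennreal ((t - sqrt (a*x))^2) * indicator {0..t^2/a} x \<partial>lborel)"
    by (rule nn_integral_cong) (simp add: slice_KK[OF assms] indicator_def)
  also have "\<dots> = ennreal (t^4/(6*a))"
    by (rule nn_integral_has_integral_lebesgue'[OF _ integral_KK[OF assms]]) simp
  finally have E: "emeasure lborel (KK a t) = ennreal (t^4/(6*a))" .
  hence "measure lborel (KK a t) = t^4/(6*a)"
    using assms by (intro measure_eq_emeasure_eq_ennreal) auto
  thus "measure lebesgue (KK a t) = t^4/(6*a)" using B by simp
  show "KK a t \<in> lmeasurable"
    using closed_KK bounded_KK[OF assms(1)] by (intro lmeasurable_compact) (simp add: compact_eq_bounded_closed)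
qed

lemma KK_scale_mem:
  assumes "z \<in> KK a t" "s \<ge> 0"
  shows "s *\<^sub>R z \<in> KK a (sqrt s * t)"
proof -
  obtain x y where z: "z = (x,y)" "y \<le> 0" "0 \<le> x" "sqrt (a*x) + sqrt (-y) \<le> t"
    using assms(1) by (auto simp: KK_def)
  have "sqrt (a*(s*x)) + sqrt (-(s*y)) = sqrt s * (sqrt (a*x) + sqrt (-y))"
    using real_sqrt_mult[of s "-y"] real_sqrt_mult[of a "s*x"] real_sqrt_mult[of s "a*x"]
    by (simp add: algebra_simps)
  also have "\<dots> \<le> sqrt s * t" using z(4) assms(2) by (intro mult_left_mono) auto
  finally show ?thesis using z assms(2) by (auto simp: KK_def mult_nonneg_nonpos)
qed

lemma KK_scale:
  assumes "s > 0"
  shows "(\<lambda>z. s *\<^sub>R z) ` KK a t = KK a (sqrt s * t)"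
proof
  show "(\<lambda>z. s *\<^sub>R z) ` KK a t \<subseteq> KK a (sqrt s * t)" using KK_scale_mem assms by auto
  show "KK a (sqrt s * t) \<subseteq> (\<lambda>z. s *\<^sub>R z) ` KK a t"
  proof
    fix w assume w: "w \<in> KK a (sqrt s * t)"
    have "(1/s) *\<^sub>R w \<in> KK a (sqrt (1/s) * (sqrt s * t))" using KK_scale_mem[OF w] assms by simp
    moreover have "sqrt (1/s) * (sqrt s * t) = t" using assms
      by (simp add: real_sqrt_divide)
    ultimately have "(1/s) *\<^sub>R w \<in> KK a t" by simp
    moreover have "w = s *\<^sub>R ((1/s) *\<^sub>R w)" using assms by simp
    ultimately show "w \<in> (\<lambda>z. s *\<^sub>R z) ` KK a t" by blast
  qed
qed

lemma KK_mono: "t \<le> t' \<Longrightarrow> KK a t \<subseteq> KK a t'"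
  by (auto simp: KK_def)

lemma zero_KK: "t \<ge> 0 \<Longrightarrow> 0 \<in> KK a t"
  by (auto simp: KK_def zero_prod_def)

lemma infdist_KK_bound:
  assumes a: "a > 0" and "z \<in> KK a b" "0 \<le> b" "0 \<le> c" "c > 0"
  shows "infdist z (KK a c) \<le> (1 + 1/a) * \<bar>b^2 - c^2\<bar>"
proof (cases "b \<le> c")
  case True
  hence "z \<in> KK a c" using assms KK_mono by blast
  hence "infdist z (KK a c) = 0" by simp
  moreover have "0 \<le> 1 + 1/a" using a by simp
  ultimately show ?thesis by simp
next
  case False
  define k where "k = (c/b)^2"
  have b0: "b > 0" using False assms by linarith
  have k01: "0 \<le> k" "k \<le> 1" using False b0 assms unfolding k_def
    by (auto simp: power_le_one divide_le_eq)
  have "sqrt k * b = c" unfolding k_def using b0 assms by (simp add: real_sqrt_divide)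
  hence mem: "k *\<^sub>R z \<in> KK a c" using KK_scale_mem[OF assms(2) k01(1)] by simp
  have "infdist z (KK a c) \<le> dist z (k *\<^sub>R z)" by (rule infdist_le[OF mem])
  also have "dist z (k *\<^sub>R z) = norm ((1 - k) *\<^sub>R z)" by (simp add: dist_norm algebra_simps)
  also have "\<dots> = (1 - k) * norm z" using k01 by simp
  also have "\<dots> \<le> (1 - k) * (b^2/a + b^2)"
    using KK_bound[OF a assms(2)] k01 by (intro mult_left_mono) auto
  also have "\<dots> = (1 + 1/a) * (b^2 - c^2)"
    unfolding k_def using b0 a by (simp add: field_simps power2_eq_square)
  also have "\<dots> \<le> (1 + 1/a) * \<bar>b^2 - c^2\<bar>" using a by (intro mult_left_mono) auto
  finally show ?thesis .
qed

lemma hausdorff_sandwich: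
  assumes a: "a > 0" and "0 \<le> \<alpha>" "0 \<le> \<beta>" "c > 0"
    and sub1: "KK a \<alpha> \<subseteq> S" and sub2: "S \<subseteq> KK a \<beta>"
  shows "\<bar>hausdorff_dist S (KK a c)\<bar> \<le> (1 + 1/a) * (\<bar>\<beta>^2 - c^2\<bar> + \<bar>\<alpha>^2 - c^2\<bar>)"
proof -
  define B where "B = (1 + 1/a) * (\<bar>\<beta>^2 - c^2\<bar> + \<bar>\<alpha>^2 - c^2\<bar>)"
  have B1: "infdist z (KK a c) \<le> B" if "z \<in> S" for z
  proof -
    have "infdist z (KK a c) \<le> (1 + 1/a) * \<bar>\<beta>^2 - c^2\<bar>"
      by (rule infdist_KK_bound[OF a]) (use that sub2 assms in auto)
    also have "\<dots> \<le> B" unfolding B_def using a by (intro mult_left_mono) auto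
    finally show ?thesis .
  qed
  have B2: "infdist w S \<le> B" if "w \<in> KK a c" for w
  proof (cases "c \<le> \<alpha>")
    case True
    hence "w \<in> S" using that sub1 KK_mono by blast
    hence "infdist w S = 0" by simp
    thus ?thesis unfolding B_def using a by simp
  next
    case False
    define k where "k = (\<alpha>/c)^2"
    have k01: "0 \<le> k" "k \<le> 1" using False assms unfolding k_def
      by (auto simp: power_le_one divide_le_eq)
    have "sqrt k * c = \<alpha>" unfolding k_def using assms by (simp add: real_sqrt_divide)
    hence mem: "k *\<^sub>R w \<in> S" using KK_scale_mem[OF that k01(1)] sub1 by auto
    have "infdist w S \<le> dist w (k *\<^sub>R w)" by (rule infdist_le[OF mem])
    also have "dist w (k *\<^sub>R w) = norm ((1 - k) *\<^sub>R w)" by (simp add: dist_norm algebra_simps)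
    also have "\<dots> = (1 - k) * norm w" using k01 by simp
    also have "\<dots> \<le> (1 - k) * (c^2/a + c^2)"
      using KK_bound[OF a that] k01 by (intro mult_left_mono) auto
    also have "\<dots> = (1 + 1/a) * (c^2 - \<alpha>^2)"
      unfolding k_def using assms by (simp add: field_simps power2_eq_square)
    also have "\<dots> \<le> B" unfolding B_def using a by (intro mult_left_mono) auto
    finally show ?thesis .
  qed
  have S0: "0 \<in> S" using sub1 zero_KK[OF assms(2)] by blast
  have K0: "0 \<in> KK a c" using zero_KK assms by simp
  have s1: "(SUP x\<in>S. infdist x (KK a c)) \<le> B" using S0 B1 by (intro cSUP_least) auto
  have s2: "(SUP y\<in>KK a c. infdist y S) \<le> B" using K0 B2 by (intro cSUP_least) auto
  have "infdist 0 (KK a c) \<le> (SUP x\<in>S. infdist x (KK a c))"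
  proof (rule cSUP_upper[OF S0])
    show "bdd_above ((\<lambda>x. infdist x (KK a c)) ` S)" using B1 by (intro bdd_aboveI2[where M=B]) blast
  qed
  hence s3: "0 \<le> (SUP x\<in>S. infdist x (KK a c))" using infdist_nonneg[of 0 "KK a c"] by linarith
  show ?thesis using s1 s2 s3 unfolding hausdorff_dist_def B_def[symmetric] by auto
qed

definition FFn :: "nat \<Rightarrow> real \<Rightarrow> nat \<Rightarrow> real" where
  "FFn n p k = 1 / ((real n - real k * p) * (real n - (real k - 1) * p))"

lemma aa_pos:
  assumes "0 < p" "p < 1" "n \<ge> 1" "real k \<le> real n + 1"
  shows "real n - (real k - 1) * p > 0"
proof -
  have "(real k - 1) * p \<le> real n * p" using assms by (intro mult_right_mono) auto
  also have "\<dots> < real n" using assms by simp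
  finally show ?thesis by simp
qed

lemma aa_pos': 
  assumes "0 < p" "p < 1" "n \<ge> 1" "k \<le> n"
  shows "real n - real k * p > 0"
  using aa_pos[OF assms(1-3), of "k+1"] assms(4) by simp

lemma Ehat_eq:
  assumes "0 < p" "p < 1" "n \<ge> 1" "1 \<le> i" "i \<le> n" "1 \<le> j" "j \<le> n"
  shows "Ehat n p j i = (FFn n p j - FFn n p i) / p"
proof -
  have 1: "real n - real i * p > 0" "real n - (real i - 1) * p > 0"
    "real n - real j * p > 0" "real n - (real j - 1) * p > 0"
    using aa_pos'[OF assms(1-3)] aa_pos[OF assms(1-3)] assms by auto
  define Ai where "Ai = real n - real i * p"
  define Aj where "Aj = real n - real j * p"
  have Bi: "real n - (real i - 1) * p = Ai + p" and Bj: "real n - (real j - 1) * p = Aj + p"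
    unfolding Ai_def Aj_def by (simp_all add: algebra_simps)
  have e1: "(real j - real i) * (2 * real n - (real i + real j - 1) * p) = (Ai - Aj) * (Ai + Aj + p) / p"
    unfolding Ai_def Aj_def using assms(1) by (simp add: field_simps)
  have pos: "Ai > 0" "Aj > 0" "Ai + p > 0" "Aj + p > 0" using 1 Bi Bj unfolding Ai_def Aj_def by auto
  have "Ehat n p j i = (Ai - Aj) * (Ai + Aj + p) / p / (Ai * (Ai + p) * Aj * (Aj + p))"
    unfolding Ehat_def e1 Bi Bj Ai_def[symmetric] Aj_def[symmetric] ..
  also have "\<dots> = (1 / (Aj * (Aj + p)) - 1 / (Ai * (Ai + p))) / p"
  proof -
    have nz: "Ai \<noteq> 0" "Aj \<noteq> 0" "Ai + p \<noteq> 0" "Aj + p \<noteq> 0" "p \<noteq> 0" using pos assms(1) by auto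
    show ?thesis using nz by (simp add: divide_simps) algebra
  qed
  also have "\<dots> = (FFn n p j - FFn n p i) / p"
    unfolding FFn_def Bi Bj Ai_def[symmetric] Aj_def[symmetric] ..
  finally show ?thesis .
qed

lemma sum_pairs_fst:
  fixes f :: "nat \<Rightarrow> nat \<Rightarrow> real"
  assumes "k \<le> n"
  shows "(\<Sum>(i,j)\<in>{(i,j). 1 \<le> i \<and> i < j \<and> j \<le> n}. f j i * stdbasis i k) = (\<Sum>j\<in>{k<..n}. if 1 \<le> k then f j k else 0)"
proof -
  let ?P = "{(i,j). 1 \<le> i \<and> i < j \<and> j \<le> n}"
  have fin: "finite ?P" by (rule finite_subset[of _ "{0..n} \<times> {0..n}"]) auto
  have "(\<Sum>(i,j)\<in>?P. f j i * stdbasis i k) = (\<Sum>z\<in>?P. if fst z = k then f (snd z) (fst z) else 0)"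
    by (rule sum.cong) (auto simp: stdbasis_def)
  also have "\<dots> = (\<Sum>z\<in>{z\<in>?P. fst z = k}. f (snd z) (fst z))"
    by (rule sum.inter_filter[OF fin, symmetric])
  also have "{z\<in>?P. fst z = k} = (if 1 \<le> k then (\<lambda>j. (k,j)) ` {k<..n} else {})" by auto
  also have "(\<Sum>z\<in>\<dots>. f (snd z) (fst z)) = (\<Sum>j\<in>{k<..n}. if 1 \<le> k then f j k else 0)"
    by (auto simp: sum.reindex inj_on_def)
  finally show ?thesis .
qed

lemma sum_pairs_snd:
  fixes f :: "nat \<Rightarrow> nat \<Rightarrow> real"
  assumes "k \<le> n"
  shows "(\<Sum>(i,j)\<in>{(i,j). 1 \<le> i \<and> i < j \<and> j \<le> n}. f j i * stdbasis j k) = (\<Sum>i\<in>{1..<k}. f k i)"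
proof -
  let ?P = "{(i,j). 1 \<le> i \<and> i < j \<and> j \<le> n}"
  have fin: "finite ?P" by (rule finite_subset[of _ "{0..n} \<times> {0..n}"]) auto
  have "(\<Sum>(i,j)\<in>?P. f j i * stdbasis j k) = (\<Sum>z\<in>?P. if snd z = k then f (snd z) (fst z) else 0)"
    by (rule sum.cong) (auto simp: stdbasis_def)
  also have "\<dots> = (\<Sum>z\<in>{z\<in>?P. snd z = k}. f (snd z) (fst z))"
    by (rule sum.inter_filter[OF fin, symmetric])
  also have "{z\<in>?P. snd z = k} = (\<lambda>i. (i,k)) ` {1..<k}" using assms by auto
  also have "(\<Sum>z\<in>\<dots>. f (snd z) (fst z)) = (\<Sum>i\<in>{1..<k}. f k i)"
    by (auto simp: sum.reindex inj_on_def)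
  finally show ?thesis .
qed

lemma gamma_eq:
  assumes "0 < p" "p < 1" "1 \<le> k" "k \<le> n"
  shows "gammavec n p k = ((\<Sum>j\<in>{1..n}. FFn n p j) - real n * FFn n p k) / p"
proof -
  have n1: "n \<ge> 1" using assms by simp
  let ?F = "FFn n p"
  have "gammavec n p k = (\<Sum>(i,j)\<in>{(i,j). 1 \<le> i \<and> i < j \<and> j \<le> n}. Ehat n p j i * stdbasis i k)
      - (\<Sum>(i,j)\<in>{(i,j). 1 \<le> i \<and> i < j \<and> j \<le> n}. Ehat n p j i * stdbasis j k)"
    unfolding gammavec_def by (simp add: right_diff_distrib sum_subtractf case_prod_beta)
  also have "\<dots> = (\<Sum>j\<in>{k<..n}. Ehat n p j k) - (\<Sum>i\<in>{1..<k}. Ehat n p k i)"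
    using sum_pairs_fst[OF assms(4), of "Ehat n p"] sum_pairs_snd[OF assms(4), of "Ehat n p"] assms
    by simp
  also have "\<dots> = (\<Sum>j\<in>{k<..n}. (?F j - ?F k) / p) - (\<Sum>i\<in>{1..<k}. (?F k - ?F i) / p)"
    using assms n1 by (intro arg_cong2[where f="(-)"] sum.cong refl Ehat_eq) auto
  also have "\<dots> = ((\<Sum>j\<in>{k<..n}. ?F j) + (\<Sum>i\<in>{1..<k}. ?F i) - real (n - k) * ?F k - real (k - 1) * ?F k) / p"
    by (simp add: sum_subtractf sum_divide_distrib[symmetric] diff_divide_distrib add_divide_distrib)
  also have "(\<Sum>j\<in>{1..n}. ?F j) = (\<Sum>i\<in>{1..<k}. ?F i) + ?F k + (\<Sum>j\<in>{k<..n}. ?F j)"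
  proof -
    have "{1..n} = {1..<k} \<union> ({k} \<union> {k<..n})" using assms by auto
    moreover have "(\<Sum>i\<in>{1..<k} \<union> {k<..n}. ?F i) = (\<Sum>i\<in>{1..<k}. ?F i) + (\<Sum>j\<in>{k<..n}. ?F j)"
      by (rule sum.union_disjoint) auto
    ultimately show ?thesis by simp
  qed
  hence "(\<Sum>j\<in>{k<..n}. ?F j) + (\<Sum>i\<in>{1..<k}. ?F i) = (\<Sum>j\<in>{1..n}. ?F j) - ?F k" by simp
  moreover have "real (n - k) + real (k - 1) + 1 = real n" using assms by (simp add: of_nat_diff)
  ultimately show ?thesis
    by (simp add: algebra_simps)
qed

definition XX :: "nat \<Rightarrow> real \<Rightarrow> nat \<Rightarrow> real" where
  "XX n p k = real k * (real k - 1) / ((real n - real k * p) * (real n - (real k - 1) * p))"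
definition YY :: "nat \<Rightarrow> real \<Rightarrow> nat \<Rightarrow> real" where
  "YY n p k = - ((real n - real k) * (real n - real k + 1) /
      ((1 - p) * (real n - real k * p) * (real n - (real k - 1) * p)))"
definition DD :: "nat \<Rightarrow> real \<Rightarrow> nat \<Rightarrow> real" where
  "DD n p k = 2 * real n / ((real n - (real k - 1) * p) * (real n - real k * p) * (real n - (real k + 1) * p))"

lemma three_pos:
  assumes "0 < p" "p < 1" "1 \<le> k" "k < n"
  shows "real n - (real k - 1) * p > 0" "real n - real k * p > 0" "real n - (real k + 1) * p > 0"
proof -
  have n1: "n \<ge> 1" using assms by simp
  show "real n - (real k - 1) * p > 0" "real n - real k * p > 0" using aa_pos[OF assms(1,2) n1, of k] aa_pos'[OF assms(1,2) n1, of k] assms by auto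
  show "real n - (real k + 1) * p > 0" using aa_pos'[OF assms(1,2) n1, of "k+1"] assms by (auto simp: add.commute)
qed

lemma hgap_eq:
  assumes "0 < p" "p < 1" "1 \<le> k" "k < n"
  shows "hgap (gammavec n p) k = DD n p k"
proof -
  have g: "hgap (gammavec n p) k = real n * (FFn n p (k+1) - FFn n p k) / p"
    unfolding hgap_def using assms by (simp add: gamma_eq field_simps)
  note p = three_pos[OF assms]
  define A where "A = real n - real k * p"
  have nz: "A \<noteq> 0" "A + p \<noteq> 0" "A - p \<noteq> 0" "p \<noteq> 0" using p assms unfolding A_def by (auto simp: algebra_simps)
  have f1: "FFn n p (k+1) = 1 / ((A - p) * A)" unfolding FFn_def A_def by (simp add: algebra_simps)
  have f2: "FFn n p k = 1 / (A * (A + p))" unfolding FFn_def A_def by (simp add: algebra_simps)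
  have d: "DD n p k = 2 * real n / ((A + p) * A * (A - p))" unfolding DD_def A_def by (simp add: algebra_simps)
  show ?thesis unfolding g d f1 f2 using nz
    by (simp add: divide_simps)
qed

lemma XX_step:
  assumes "0 < p" "p < 1" "1 \<le> i" "i < n"
  shows "XX n p (Suc i) - XX n p i = real i * DD n p i"
proof -
  note p = three_pos[OF assms]
  define A where "A = real n - real i * p"
  have nz: "A \<noteq> 0" "A + p \<noteq> 0" "A - p \<noteq> 0" "p \<noteq> 0" using p assms unfolding A_def by (auto simp: algebra_simps)
  have f1: "XX n p (Suc i) = (real i + 1) * real i / ((A - p) * A)" unfolding XX_def A_def by (simp add: algebra_simps)
  have f2: "XX n p i = real i * (real i - 1) / (A * (A + p))" unfolding XX_def A_def by (simp add: algebra_simps)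
  have d: "DD n p i = 2 * (A + real i * p) / ((A + p) * A * (A - p))" unfolding DD_def A_def by (simp add: algebra_simps)
  show ?thesis unfolding d f1 f2 using nz
    by (simp add: divide_simps) (simp add: algebra_simps)
qed

lemma YY_step:
  assumes "0 < p" "p < 1" "1 \<le> i" "i < n"
  shows "YY n p (Suc i) - YY n p i = (real n - real i) * DD n p i"
proof -
  note p = three_pos[OF assms]
  define A where "A = real n - real i * p"
  have nz: "A \<noteq> 0" "A + p \<noteq> 0" "A - p \<noteq> 0" "p \<noteq> 0" "1 - p \<noteq> 0" using p assms unfolding A_def by (auto simp: algebra_simps)
  have n: "real n = A + real i * p" unfolding A_def by simp
  have f1: "YY n p (Suc i) = - ((A + real i * p - real i - 1) * (A + real i * p - real i) / ((1 - p) * (A - p) * A))"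
    unfolding YY_def A_def by (simp add: algebra_simps)
  have f2: "YY n p i = - ((A + real i * p - real i) * (A + real i * p - real i + 1) / ((1 - p) * A * (A + p)))"
    unfolding YY_def A_def by (simp add: algebra_simps)
  have d: "(real n - real i) * DD n p i = (A + real i * p - real i) * (2 * (A + real i * p)) / ((A + p) * A * (A - p))"
    unfolding DD_def A_def by (simp add: algebra_simps)
  show ?thesis unfolding d f1 f2 using nz
    by (simp add: divide_simps) (simp add: algebra_simps)
qed

lemma rpt_eq:
  assumes "0 < p" "p < 1" "1 \<le> k" "k \<le> n"
  shows "rpt n (gammavec n p) k = (XX n p k, YY n p k)"
proof -
  have "(\<Sum>i\<in>{1..<k}. real i * hgap (gammavec n p) i) = (\<Sum>i\<in>{1..<k}. XX n p (Suc i) - XX n p i)"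
    using assms by (intro sum.cong refl) (simp add: hgap_eq XX_step)
  also have "\<dots> = XX n p k - XX n p 1" by (rule sum_Suc_diff'[OF assms(3)])
  finally have 1: "(\<Sum>i\<in>{1..<k}. real i * hgap (gammavec n p) i) = XX n p k" by (simp add: XX_def)
  have "(\<Sum>i\<in>{k..<n}. (real n - real i) * hgap (gammavec n p) i) = (\<Sum>i\<in>{k..<n}. YY n p (Suc i) - YY n p i)"
    using assms by (intro sum.cong refl) (simp add: hgap_eq YY_step)
  also have "\<dots> = YY n p n - YY n p k" by (rule sum_Suc_diff'[OF assms(4)])
  finally have 2: "- (\<Sum>i\<in>{k..<n}. (real n - real i) * hgap (gammavec n p) i) = YY n p k" by (simp add: YY_def)
  show ?thesis unfolding rpt_def 1 2 ..
qed

lemma DD_pos: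
  assumes "0 < p" "p < 1" "1 \<le> k" "k < n"
  shows "DD n p k > 0"
  using three_pos[OF assms] assms unfolding DD_def by (intro divide_pos_pos mult_pos_pos) auto

lemma sqrt_ge_aux: "0 \<le> u \<Longrightarrow> u * u \<le> v \<Longrightarrow> u \<le> sqrt v"
  by (rule real_le_rsqrt) (simp add: power2_eq_square)

lemma sqrt_le_aux: "0 \<le> u \<Longrightarrow> v \<le> u * u \<Longrightarrow> sqrt v \<le> u"
  by (rule real_le_lsqrt) (simp_all add: power2_eq_square)

lemma lower_est:
  assumes "0 < p" "p < 1" "1 \<le> k" "k \<le> n"
  shows "sqrt ((1 - p) * XX n p k) + sqrt (- YY n p k) \<ge> (1 - 1 / (real n * (1 - p))) / sqrt (1 - p)"
proof -
  define a where "a = 1 - p"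
  have a: "a > 0" using assms unfolding a_def by simp
  have n1: "n \<ge> 1" using assms by simp
  define B0 where "B0 = real n - (real k - 1) * p"
  define B1 where "B1 = real n - real k * p"
  have B1: "B1 > 0" using aa_pos'[OF assms(1,2) n1 assms(4)] unfolding B1_def .
  have B01: "B1 \<le> B0" unfolding B0_def B1_def using assms by (simp add: algebra_simps)
  have B0na: "B0 \<ge> real n * a"
  proof -
    have "(real k - 1) * p \<le> real n * p" using assms by (intro mult_right_mono) auto
    thus ?thesis unfolding B0_def a_def by (simp add: algebra_simps)
  qed
  have na: "real n * a > 0" using a n1 by simp
  have B0: "B0 > 0" using B0na na by linarith
  define u where "u = (real k - 1) / B0"
  define v where "v = (real n - real k) / B0"
  have u0: "u \<ge> 0" unfolding u_def using assms B0 by simp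
  have v0: "v \<ge> 0" unfolding v_def using assms B0 by simp
  have xx: "XX n p k = (real k / B1) * u" unfolding XX_def B0_def B1_def u_def by simp
  have fr: "real k / B1 \<ge> u" unfolding u_def by (rule frac_le) (use B1 B01 in auto)
  have "XX n p k \<ge> u * u" unfolding xx by (rule mult_right_mono[OF fr u0])
  hence "a * XX n p k \<ge> (sqrt a * u) * (sqrt a * u)" using a by (simp add: algebra_simps)
  hence s1: "sqrt (a * XX n p k) \<ge> sqrt a * u" using u0 a by (intro sqrt_ge_aux) auto
  define P where "P = (real n - real k) / B1"
  define Q where "Q = (real n - real k + 1) / B0"
  have yy: "- YY n p k = P * Q / a"
    unfolding YY_def B0_def B1_def a_def P_def Q_def by simp
  have "P \<ge> v" unfolding v_def P_def by (rule frac_le) (use B1 B01 assms in auto)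
  moreover have "Q \<ge> v" unfolding v_def Q_def using B0 by (simp add: divide_right_mono)
  ultimately have "v * v \<le> P * Q" using v0 by (intro mult_mono) auto
  hence "- YY n p k \<ge> v * v / a" unfolding yy using a by (intro divide_right_mono) auto
  hence "- YY n p k \<ge> (v / sqrt a) * (v / sqrt a)" using a by (simp add: power2_eq_square[symmetric] power_divide)
  hence s2: "sqrt (- YY n p k) \<ge> v / sqrt a" using v0 a by (intro sqrt_ge_aux) auto
  have "sqrt a * u + v / sqrt a = (a * (real k - 1) + (real n - real k)) / (sqrt a * B0)"
    unfolding u_def v_def using a B0 by (simp add: field_simps)
  also have "a * (real k - 1) + (real n - real k) = B0 - 1" unfolding a_def B0_def by (simp add: algebra_simps)
  also have "(B0 - 1) / (sqrt a * B0) = (1 - 1 / B0) / sqrt a" using B0 a by (simp add: field_simps)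
  also have "\<dots> \<ge> (1 - 1 / (real n * a)) / sqrt a"
    using B0na na a by (intro divide_right_mono) (auto simp: frac_le)
  finally show ?thesis using s1 s2 unfolding a_def by linarith
qed

lemma upper_est:
  assumes "0 < p" "p < 1" "1 \<le> k" "k < n"
  shows "sqrt ((1 - p) * XX n p (Suc k)) + sqrt (- YY n p k) \<le> (1 + 2 / (real n * (1 - p))) / sqrt (1 - p)"
proof -
  define a where "a = 1 - p"
  have a: "a > 0" using assms unfolding a_def by simp
  have n1: "n \<ge> 1" using assms by simp
  define B0 where "B0 = real n - (real k - 1) * p"
  define B1 where "B1 = real n - real k * p"
  define C1 where "C1 = real n - (real k + 1) * p"
  have C1B1: "C1 \<le> B1" "B1 \<le> B0" unfolding B0_def B1_def C1_def using assms by (simp_all add: algebra_simps)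
  have C1na: "C1 \<ge> real n * a"
  proof -
    have "(real k + 1) * p \<le> real n * p" using assms by (intro mult_right_mono) auto
    thus ?thesis unfolding C1_def a_def by (simp add: algebra_simps)
  qed
  have na: "real n * a > 0" using a n1 by simp
  have C1: "C1 > 0" using C1na na by linarith
  define u where "u = (real k + 1) / C1"
  define v where "v = (real n - real k + 1) / C1"
  have u0: "u \<ge> 0" unfolding u_def using C1 by simp
  have v0: "v \<ge> 0" unfolding v_def using assms C1 by simp
  have xx: "XX n p (Suc k) = u * (real k / B1)" unfolding XX_def C1_def B1_def u_def by (simp add: algebra_simps)
  have fr: "real k / B1 \<le> u" unfolding u_def by (rule frac_le) (use C1 C1B1 in auto)
  have "XX n p (Suc k) \<le> u * u" unfolding xx by (rule mult_left_mono[OF fr u0])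
  hence "a * XX n p (Suc k) \<le> (sqrt a * u) * (sqrt a * u)" using a by (simp add: algebra_simps)
  hence s1: "sqrt (a * XX n p (Suc k)) \<le> sqrt a * u" using u0 a by (intro sqrt_le_aux) auto
  define P where "P = (real n - real k) / B1"
  define Q where "Q = (real n - real k + 1) / B0"
  have yy: "- YY n p k = P * Q / a"
    unfolding YY_def B0_def B1_def a_def P_def Q_def by simp
  have "P \<le> v" unfolding v_def P_def by (rule frac_le) (use C1 C1B1 assms in auto)
  moreover have "Q \<le> v" unfolding v_def Q_def by (rule frac_le) (use C1 C1B1 assms in auto)
  moreover have "P \<ge> 0" "Q \<ge> 0" unfolding P_def Q_def using C1 C1B1 assms by auto
  ultimately have "P * Q \<le> v * v" using v0 by (intro mult_mono) auto
  hence "- YY n p k \<le> v * v / a" unfolding yy using a by (intro divide_right_mono) auto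
  hence "- YY n p k \<le> (v / sqrt a) * (v / sqrt a)" using a by (simp add: power2_eq_square[symmetric] power_divide)
  hence s2: "sqrt (- YY n p k) \<le> v / sqrt a" using v0 a by (intro sqrt_le_aux) auto
  have "sqrt a * u + v / sqrt a = (a * (real k + 1) + (real n - real k + 1)) / (sqrt a * C1)"
    unfolding u_def v_def using a C1 by (simp add: field_simps)
  also have "a * (real k + 1) + (real n - real k + 1) = C1 + 2" unfolding a_def C1_def by (simp add: algebra_simps)
  also have "(C1 + 2) / (sqrt a * C1) = (1 + 2 / C1) / sqrt a" using C1 a by (simp add: field_simps)
  also have "\<dots> \<le> (1 + 2 / (real n * a)) / sqrt a"
    using C1na na a by (intro divide_right_mono) (auto simp: frac_le)
  finally show ?thesis using s1 s2 unfolding a_def by linarith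
qed

locale polyline =
  fixes n :: nat and a :: real and X Y d :: "nat \<Rightarrow> real"
  assumes n2: "n \<ge> 2" and apos: "a > 0"
    and X1: "X 1 = 0" and Yn: "Y n = 0"
    and dX: "\<And>k. 1 \<le> k \<Longrightarrow> k < n \<Longrightarrow> X (Suc k) - X k = real k * d k"
    and dY: "\<And>k. 1 \<le> k \<Longrightarrow> k < n \<Longrightarrow> Y (Suc k) - Y k = (real n - real k) * d k"
    and dpos: "\<And>k. 1 \<le> k \<Longrightarrow> k < n \<Longrightarrow> d k > 0"
begin

definition P :: "nat \<Rightarrow> real \<times> real" where "P k = (X k, Y k)"

definition L :: "nat \<Rightarrow> real \<Rightarrow> real" where
  "L k x = Y k + (real n - real k) / real k * (x - X k)"

lemma X_step: "1 \<le> k \<Longrightarrow> k < n \<Longrightarrow> X k < X (Suc k)"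
  using dX[of k] dpos[of k] by (simp add: algebra_simps)

lemma Y_step: "1 \<le> k \<Longrightarrow> k < n \<Longrightarrow> Y k < Y (Suc k)"
proof -
  assume k: "1 \<le> k" "k < n"
  have "(real n - real k) * d k > 0" using dpos[OF k] k by (intro mult_pos_pos) auto
  thus ?thesis using dY[OF k] by simp
qed

lemma X_mono: assumes "1 \<le> i" "i \<le> j" "j \<le> n" shows "X i \<le> X j"
proof -
  have "j \<le> n \<longrightarrow> X i \<le> X j" using assms(2)
  proof (induction j rule: dec_induct)
    case (step j) thus ?case using X_step[of j] assms(1) by fastforce
  qed simp
  thus ?thesis using assms by simp
qed

lemma Y_mono: assumes "1 \<le> i" "i \<le> j" "j \<le> n" shows "Y i \<le> Y j"
proof -
  have "j \<le> n \<longrightarrow> Y i \<le> Y j" using assms(2)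
  proof (induction j rule: dec_induct)
    case (step j) thus ?case using Y_step[of j] assms(1) by fastforce
  qed simp
  thus ?thesis using assms by simp
qed

lemma X_nonneg: "1 \<le> k \<Longrightarrow> k \<le> n \<Longrightarrow> X k \<ge> 0"
  using X_mono[of 1 k] X1 by simp

lemma Y_nonpos: "1 \<le> k \<Longrightarrow> k \<le> n \<Longrightarrow> Y k \<le> 0"
  using Y_mono[of k n] Yn by simp

lemma Y1_neg: "Y 1 < 0"
  using Y_step[of 1] Y_mono[of 2 n] n2 Yn by (simp add: numeral_2_eq_2)

lemma exists_seg:
  assumes "0 \<le> x" "x \<le> X n"
  shows "\<exists>j. 1 \<le> j \<and> j < n \<and> X j \<le> x \<and> x \<le> X (Suc j)"
proof -
  define S where "S = {k\<in>{1..<n}. X k \<le> x}"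
  have fin: "finite S" unfolding S_def by simp
  have ne: "1 \<in> S" unfolding S_def using n2 X1 assms by simp
  define j where "j = Max S"
  have jS: "j \<in> S" unfolding j_def using fin ne by (intro Max_in) auto
  hence j: "1 \<le> j" "j < n" "X j \<le> x" unfolding S_def by auto
  have "x \<le> X (Suc j)"
  proof (cases "Suc j < n")
    case True
    have "Suc j \<notin> S" using Max_ge[OF fin, of "Suc j"] unfolding j_def[symmetric] by auto
    thus ?thesis using True j unfolding S_def by auto
  next
    case False
    hence "Suc j = n" using j by simp
    thus ?thesis using assms by simp
  qed
  thus ?thesis using j by blast
qed

lemma L_at_next: "1 \<le> k \<Longrightarrow> k < n \<Longrightarrow> L k (X (Suc k)) = Y (Suc k)"
  unfolding L_def using dX[of k] dY[of k] by simp

lemma L_at: "L k (X k) = Y k" unfolding L_def by simp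

lemma L_diff:
  assumes "1 \<le> k" "Suc k < n"
  shows "L k x - L (Suc k) x = ((real n - real k) / real k - (real n - real (Suc k)) / real (Suc k)) * (x - X (Suc k))"
proof -
  define s where "s = (real n - real k) / real k"
  define s' where "s' = (real n - real (Suc k)) / real (Suc k)"
  have e: "Y k + s * (X (Suc k) - X k) = Y (Suc k)" using L_at_next[of k] assms unfolding L_def s_def by simp
  have "L k x = Y k + s * (x - X k)" unfolding L_def s_def ..
  also have "\<dots> = Y k + s * (X (Suc k) - X k) + s * (x - X (Suc k))" by (simp add: algebra_simps)
  finally have 1: "L k x = Y (Suc k) + s * (x - X (Suc k))" using e by simp
  have 2: "L (Suc k) x = Y (Suc k) + s' * (x - X (Suc k))" unfolding L_def s'_def ..
  show ?thesis unfolding 1 2 s_def[symmetric] s'_def[symmetric] by (simp add: algebra_simps)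
qed

lemma slope_dec:
  assumes "1 \<le> k" "Suc k < n"
  shows "(real n - real (Suc k)) / real (Suc k) \<le> (real n - real k) / real k"
  using assms by (intro frac_le) auto

lemma conc_down:
  assumes "1 \<le> k" "k \<le> j" "j < n" "X j \<le> x"
  shows "L j x \<le> L k x"
proof -
  have "1 \<le> k \<longrightarrow> L j x \<le> L k x" using assms(2)
  proof (induction k rule: inc_induct)
    case (step k)
    show ?case
    proof
      assume k1: "1 \<le> k"
      have "L (Suc k) x \<le> L k x"
      proof -
        have "X (Suc k) \<le> X j" using step k1 assms by (intro X_mono) auto
        hence "x - X (Suc k) \<ge> 0" using assms by simp
        moreover have "(real n - real k) / real k - (real n - real (Suc k)) / real (Suc k) \<ge> 0"
          using slope_dec[of k] step k1 assms by simp
        ultimately have "((real n - real k) / real k - (real n - real (Suc k)) / real (Suc k)) * (x - X (Suc k)) \<ge> 0"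
          by (intro mult_nonneg_nonneg)
        thus ?thesis using L_diff[of k x] step k1 assms by linarith
      qed
      thus "L j x \<le> L k x" using step by simp
    qed
  qed simp
  thus ?thesis using assms by simp
qed

lemma conc_up:
  assumes "1 \<le> j" "j \<le> k" "k < n" "x \<le> X (Suc j)"
  shows "L j x \<le> L k x"
proof -
  have "k < n \<longrightarrow> L j x \<le> L k x" using assms(2)
  proof (induction k rule: dec_induct)
    case (step k)
    show ?case
    proof
      assume k1: "Suc k < n"
      have "L k x \<le> L (Suc k) x"
      proof -
        have "X (Suc j) \<le> X (Suc k)" using step k1 assms by (intro X_mono) auto
        hence "x - X (Suc k) \<le> 0" using assms by simp
        moreover have "(real n - real k) / real k - (real n - real (Suc k)) / real (Suc k) \<ge> 0"
          using slope_dec[of k] step k1 assms by simp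
        ultimately have "((real n - real k) / real k - (real n - real (Suc k)) / real (Suc k)) * (x - X (Suc k)) \<le> 0"
          by (intro mult_nonneg_nonpos)
        thus ?thesis using L_diff[of k x] step k1 assms by linarith
      qed
      thus "L j x \<le> L (Suc k) x" using step k1 by simp
    qed
  qed simp
  thus ?thesis using assms by simp
qed

lemma conc:
  assumes "1 \<le> j" "j < n" "X j \<le> x" "x \<le> X (Suc j)" "1 \<le> k" "k < n"
  shows "L j x \<le> L k x"
  using conc_down[of k j x] conc_up[of j k x] assms by (cases "k \<le> j") auto

lemma L_between:
  assumes "1 \<le> j" "j < n" "X j \<le> x" "x \<le> X (Suc j)"
  shows "Y j \<le> L j x" "L j x \<le> Y (Suc j)"
    "(x, L j x) = (1 - (x - X j) / (X (Suc j) - X j)) *\<^sub>R P j + ((x - X j) / (X (Suc j) - X j)) *\<^sub>R P (Suc j)"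
proof -
  have pos: "X (Suc j) - X j > 0" using X_step[OF assms(1,2)] by simp
  have sl: "(real n - real j) / real j = (Y (Suc j) - Y j) / (X (Suc j) - X j)"
    using dX[OF assms(1,2)] dY[OF assms(1,2)] dpos[OF assms(1,2)] assms by simp
  define u where "u = (x - X j) / (X (Suc j) - X j)"
  have u: "0 \<le> u" "u \<le> 1" unfolding u_def using pos assms by auto
  have Lu: "L j x = Y j + u * (Y (Suc j) - Y j)" unfolding L_def sl u_def by simp
  have xu: "x = X j + u * (X (Suc j) - X j)" unfolding u_def using pos by simp
  have ys: "Y j \<le> Y (Suc j)" using Y_step[OF assms(1,2)] by simp
  show "Y j \<le> L j x" unfolding Lu using u ys by simp
  show "L j x \<le> Y (Suc j)" unfolding Lu using u ys
    by (smt (verit, best) mult_left_le_one_le)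
  show "(x, L j x) = (1 - (x - X j) / (X (Suc j) - X j)) *\<^sub>R P j + ((x - X j) / (X (Suc j) - X j)) *\<^sub>R P (Suc j)"
  proof -
    have e1: "(1 - u) * X j + u * X (Suc j) = x" using xu by (simp add: algebra_simps)
    have e2: "(1 - u) * Y j + u * Y (Suc j) = L j x" using Lu by (simp add: algebra_simps)
    have "(1 - u) *\<^sub>R P j + u *\<^sub>R P (Suc j) = ((1 - u) * X j + u * X (Suc j), (1 - u) * Y j + u * Y (Suc j))"
      unfolding P_def by simp
    thus ?thesis unfolding u_def[symmetric] e1 e2 by simp
  qed
qed

end
lemma connected_compl_KK:
  assumes a: "a > 0" and T: "T \<ge> 0"
  shows "connected (- KK a T)" "\<not> bounded (- KK a T)"
proof -
  define H :: "(real \<times> real) set" where "H = {z. snd z > 0}"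
  have HK: "H \<subseteq> - KK a T" unfolding H_def KK_def by auto
  have Hc: "connected H"
  proof -
    have "H = {z. inner (0::real, 1::real) z > 0}" unfolding H_def by (auto simp: inner_Pair)
    thus ?thesis using convex_halfspace_gt convex_connected by metis
  qed
  have H01: "(0, 1) \<in> H" unfolding H_def by simp
  define Q where "Q z = (if snd z > 0 then H
      else if fst z < 0 then closed_segment z (fst z, 1) \<union> H
      else closed_segment z (max (fst z) (T^2/a + 1), snd z) \<union>
           closed_segment (max (fst z) (T^2/a + 1), snd z) (max (fst z) (T^2/a + 1), 1) \<union> H)" for z
  have Qprops: "connected (Q z) \<and> z \<in> Q z \<and> H \<subseteq> Q z \<and> Q z \<subseteq> - KK a T" if z: "z \<notin> KK a T" for z
  proof -
    obtain x y where xy: "z = (x, y)" by fastforce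
    consider "y > 0" | "y \<le> 0" "x < 0" | "y \<le> 0" "x \<ge> 0" by linarith
    thus ?thesis
    proof cases
      case 1 thus ?thesis unfolding Q_def using xy Hc HK by (auto simp: H_def)
    next
      case 2
      have Q: "Q z = closed_segment z (x, 1) \<union> H" unfolding Q_def using 2 xy by simp
      have seg: "closed_segment z (x, 1) \<subseteq> - KK a T"
      proof
        fix w assume "w \<in> closed_segment z (x, 1)"
        then obtain u where "w = (1 - u) *\<^sub>R z + u *\<^sub>R (x, 1)" by (auto simp: in_segment)
        hence "fst w = x" using xy by (simp add: algebra_simps)
        thus "w \<in> - KK a T" using 2 by (auto simp: KK_def)
      qed
      have "(x, 1) \<in> closed_segment z (x, 1) \<inter> H" unfolding H_def by simp
      hence "connected (Q z)" unfolding Q by (intro connected_Un Hc) auto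
      thus ?thesis using seg HK unfolding Q by auto
    next
      case 3
      define X' where "X' = max x (T^2/a + 1)"
      have Q: "Q z = closed_segment z (X', y) \<union> closed_segment (X', y) (X', 1) \<union> H"
        unfolding Q_def X'_def using 3 xy by simp
      have Fz: "sqrt (a * x) + sqrt (- y) > T" using z 3 xy by (auto simp: KK_def)
      have seg1: "closed_segment z (X', y) \<subseteq> - KK a T"
      proof
        fix w assume "w \<in> closed_segment z (X', y)"
        then obtain u where u: "0 \<le> u" "u \<le> 1" "w = (1 - u) *\<^sub>R z + u *\<^sub>R (X', y)" by (auto simp: in_segment)
        hence w: "w = ((1 - u) * x + u * X', y)" using xy by (simp add: algebra_simps)
        have "x \<le> X'" unfolding X'_def by simp
        hence "u * x \<le> u * X'" using u by (intro mult_left_mono) auto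
        hence "x \<le> (1 - u) * x + u * X'" by (simp add: algebra_simps)
        hence "sqrt (a * x) \<le> sqrt (a * ((1 - u) * x + u * X'))"
          using a by (intro real_sqrt_le_mono mult_left_mono) auto
        hence "\<not> (sqrt (a * ((1 - u) * x + u * X')) + sqrt (- y) \<le> T)" using Fz by linarith
        thus "w \<in> - KK a T" using w by (simp add: KK_def)
      qed
      have aX: "sqrt (a * X') > T"
      proof -
        have "a * X' \<ge> a * (T^2/a + 1)" unfolding X'_def using a by (intro mult_left_mono) auto
        moreover have "a * (T^2/a + 1) = T^2 + a" using a by (simp add: field_simps)
        ultimately have "a * X' > T^2" using a by linarith
        thus ?thesis using T real_less_rsqrt by blast
      qed
      have seg2: "closed_segment (X', y) (X', 1) \<subseteq> - KK a T"
      proof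
        fix w assume "w \<in> closed_segment (X', y) (X', 1)"
        then obtain u where u: "w = (1 - u) *\<^sub>R (X', y) + u *\<^sub>R (X', 1)" by (auto simp: in_segment)
        hence fw: "fst w = X'" by (simp add: algebra_simps)
        show "w \<in> - KK a T"
        proof
          assume "w \<in> KK a T"
          hence w: "snd w \<le> 0" "sqrt (a * fst w) + sqrt (- snd w) \<le> T" by (cases w, auto simp: KK_def)+
          have "sqrt (- snd w) \<ge> 0" using w by simp
          moreover have "sqrt (a * fst w) = sqrt (a * X')" using fw by simp
          ultimately show False using w aX by linarith
        qed
      qed
      have c1: "connected (closed_segment z (X', y) \<union> closed_segment (X', y) (X', 1))"
        by (intro connected_Un) auto
      have "(X', 1) \<in> (closed_segment z (X', y) \<union> closed_segment (X', y) (X', 1)) \<inter> H"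
        unfolding H_def by simp
      hence "connected (Q z)" unfolding Q by (intro connected_Un c1 Hc) auto
      thus ?thesis using seg1 seg2 HK unfolding Q by auto
    qed
  qed
  have eq: "- KK a T = \<Union> (Q ` (- KK a T))"
  proof
    show "- KK a T \<subseteq> \<Union> (Q ` (- KK a T))" using Qprops by blast
    show "\<Union> (Q ` (- KK a T)) \<subseteq> - KK a T" using Qprops by blast
  qed
  have "connected (\<Union> (Q ` (- KK a T)))"
  proof (rule connected_Union)
    show "\<And>s. s \<in> Q ` (- KK a T) \<Longrightarrow> connected s" using Qprops by blast
    have "(0, 1) \<in> \<Inter> (Q ` (- KK a T))" using Qprops H01 by blast
    thus "\<Inter> (Q ` (- KK a T)) \<noteq> {}" by blast
  qed
  thus "connected (- KK a T)" using eq by simp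
  show "\<not> bounded (- KK a T)"
  proof
    assume "bounded (- KK a T)"
    then obtain B where B: "\<And>w. w \<in> - KK a T \<Longrightarrow> norm w \<le> B" unfolding bounded_iff by blast
    have "(0, \<bar>B\<bar> + 1) \<in> H" unfolding H_def by simp
    hence "(0, \<bar>B\<bar> + 1) \<in> - KK a T" using HK by blast
    from B[OF this] show False by (simp add: norm_Pair)
  qed
qed

lemma sqrt_concave:
  assumes "0 \<le> A" "0 \<le> B" "0 \<le> u" "u \<le> 1"
  shows "(1 - u) * sqrt A + u * sqrt B \<le> sqrt ((1 - u) * A + u * B)"
proof (rule sqrt_ge_aux)
  show "0 \<le> (1 - u) * sqrt A + u * sqrt B" using assms by simp
  define s where "s = sqrt A"
  define t where "t = sqrt B"
  have A: "A = s * s" and B: "B = t * t" unfolding s_def t_def using assms by simp_all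
  have "(1 - u) * A + u * B - ((1 - u) * s + u * t) * ((1 - u) * s + u * t) = u * (1 - u) * ((s - t) * (s - t))"
    unfolding A B by (simp add: algebra_simps)
  moreover have "u * (1 - u) * ((s - t) * (s - t)) \<ge> 0" using assms by simp
  ultimately show "((1 - u) * sqrt A + u * sqrt B) * ((1 - u) * sqrt A + u * sqrt B) \<le> (1 - u) * A + u * B"
    unfolding s_def[symmetric] t_def[symmetric] by linarith
qed

lemma cvx_bounds:
  fixes A B u :: real
  assumes "0 \<le> u" "u \<le> 1" "A \<le> B"
  shows "A \<le> (1 - u) * A + u * B" "(1 - u) * A + u * B \<le> B"
proof -
  have "u * A \<le> u * B" using assms by (intro mult_left_mono) auto
  thus "A \<le> (1 - u) * A + u * B" by (simp add: algebra_simps)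
  have "(1 - u) * A \<le> (1 - u) * B" using assms by (intro mult_left_mono) auto
  thus "(1 - u) * A + u * B \<le> B" by (simp add: algebra_simps)
qed

lemma in_KK_dom:
  assumes "0 \<le> x" "x \<le> x'" "y' \<le> y" "y \<le> 0" "sqrt (a * x') + sqrt (- y') \<le> T" "a > 0"
  shows "(x, y) \<in> KK a T"
proof -
  have "sqrt (a * x) \<le> sqrt (a * x')" using assms by (intro real_sqrt_le_mono mult_left_mono) auto
  moreover have "sqrt (- y) \<le> sqrt (- y')" using assms by simp
  ultimately have "sqrt (a * x) + sqrt (- y) \<le> T" using assms(5) by linarith
  thus ?thesis using assms unfolding KK_def by simp
qed

context polyline
begin

definition C :: "(real \<times> real) set" where
  "C = closed_segment 0 (P 1) \<union> (\<Union>k\<in>{1..<n}. closed_segment (P k) (P (k + 1))) \<union> closed_segment (P n) 0"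

definition U :: "(real \<times> real) set" where
  "U = {z. 0 \<le> fst z \<and> fst z \<le> X n \<and> snd z \<le> 0 \<and> (\<exists>k\<in>{1..<n}. L k (fst z) \<le> snd z)}"

definition W :: "(real \<times> real) set" where
  "W = {z. 0 < fst z \<and> fst z < X n \<and> snd z < 0 \<and> (\<exists>k\<in>{1..<n}. L k (fst z) < snd z)}"

lemma X_strict: "1 \<le> i \<Longrightarrow> i < j \<Longrightarrow> j \<le> n \<Longrightarrow> X i < X j"
  using X_step[of i] X_mono[of "Suc i" j] by fastforce

lemma Xn_pos: "X n > 0" using X_strict[of 1 n] n2 X1 by simp

lemma U_char:
  assumes "z \<in> U"
  shows "\<exists>j. 1 \<le> j \<and> j < n \<and> X j \<le> fst z \<and> fst z \<le> X (Suc j) \<and> L j (fst z) \<le> snd z"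
proof -
  from assms obtain k where k: "k \<in> {1..<n}" "L k (fst z) \<le> snd z" and x: "0 \<le> fst z" "fst z \<le> X n"
    unfolding U_def by auto
  obtain j where j: "1 \<le> j" "j < n" "X j \<le> fst z" "fst z \<le> X (Suc j)" using exists_seg[OF x] by blast
  have "L j (fst z) \<le> L k (fst z)" using conc[OF j] k by auto
  thus ?thesis using j k by fastforce
qed

lemma U_sub_box: "U \<subseteq> cbox (0, Y 1) (X n, 0)"
proof
  fix z assume z: "z \<in> U"
  obtain j where j: "1 \<le> j" "j < n" "X j \<le> fst z" "fst z \<le> X (Suc j)" "L j (fst z) \<le> snd z"
    using U_char[OF z] by blast
  have "Y 1 \<le> Y j" using j by (intro Y_mono) auto
  also have "Y j \<le> L j (fst z)" using L_between(1)[OF j(1-4)] .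
  finally have "Y 1 \<le> snd z" using j by linarith
  thus "z \<in> cbox (0, Y 1) (X n, 0)" using z unfolding U_def by (cases z) (auto simp: cbox_Pair_eq)
qed

lemma bounded_U: "bounded U"
  using U_sub_box bounded_cbox bounded_subset by blast

lemma closed_U: "closed U"
proof -
  have "U = (\<Union>k\<in>{1..<n}. {z. 0 \<le> fst z} \<inter> {z. fst z \<le> X n} \<inter> {z. snd z \<le> 0} \<inter> {z. L k (fst z) \<le> snd z})"
    unfolding U_def by auto
  also have "closed \<dots>"
    unfolding L_def by (intro closed_UN finite_atLeastLessThan ballI closed_Int closed_Collect_le continuous_intros)
  finally show ?thesis .
qed

lemma open_W: "open W"
proof -
  have "W = (\<Union>k\<in>{1..<n}. {z. 0 < fst z} \<inter> {z. fst z < X n} \<inter> {z. snd z < 0} \<inter> {z. L k (fst z) < snd z})"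
    unfolding W_def by auto
  also have "open \<dots>"
    unfolding L_def by (intro open_UN ballI open_Int open_Collect_less continuous_intros)
  finally show ?thesis .
qed

lemma W_sub_U: "W \<subseteq> U"
proof
  fix z assume "z \<in> W"
  then obtain k where "k \<in> {1..<n}" "L k (fst z) < snd z" "0 < fst z" "fst z < X n" "snd z < 0"
    unfolding W_def by auto
  thus "z \<in> U" unfolding U_def by (auto intro!: bexI[of _ k])
qed

lemma seg_mem: "0 \<le> u \<Longrightarrow> u \<le> 1 \<Longrightarrow> (1 - u) *\<^sub>R A + u *\<^sub>R B \<in> closed_segment A B"
  by (auto simp: in_segment)

lemma U_minus_W: "U - W \<subseteq> C"
proof
  fix z assume zUW: "z \<in> U - W"
  obtain x y where z: "z = (x, y)" by fastforce
  have zU: "0 \<le> x" "x \<le> X n" "y \<le> 0" using zUW z unfolding U_def by auto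
  obtain j where j: "1 \<le> j" "j < n" "X j \<le> x" "x \<le> X (Suc j)" "L j x \<le> y"
    using U_char[of z] zUW z by auto
  have Yj: "Y 1 \<le> Y j" using j by (intro Y_mono) auto
  note Lb = L_between[OF j(1-4)]
  have case_y0: "(x, y) \<in> C" if y0: "y = 0"
  proof -
    define u where "u = 1 - x / X n"
    have u: "0 \<le> u" "u \<le> 1" unfolding u_def using zU Xn_pos by auto
    have "(x, y) = (1 - u) *\<^sub>R P n + u *\<^sub>R 0" unfolding u_def P_def using Xn_pos y0 Yn by simp
    thus ?thesis using seg_mem[OF u, of "P n" 0] unfolding C_def by auto
  qed
  consider "y = 0" | "x = 0" "y \<noteq> 0" | "x = X n" "y \<noteq> 0" | "0 < x" "x < X n" "y < 0" using zU by linarith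
  thus "z \<in> C"
  proof cases
    case 1 thus ?thesis using case_y0 z by simp
  next
    case 2
    have y1: "Y 1 \<le> y" using Lb(1) j Yj by linarith
    have Y1n: "Y 1 < 0" by (rule Y1_neg)
    define u where "u = y / Y 1"
    have u: "0 \<le> u" "u \<le> 1" unfolding u_def using Y1n y1 zU by (auto simp: divide_le_eq_1 zero_le_divide_iff)
    have "(x, y) = (1 - u) *\<^sub>R 0 + u *\<^sub>R P 1" unfolding u_def P_def using 2 X1 Y1n by simp
    thus ?thesis using seg_mem[OF u, of 0 "P 1"] z unfolding C_def by auto
  next
    case 3
    have "Suc j = n"
    proof (rule ccontr)
      assume "Suc j \<noteq> n"
      hence "X (Suc j) < X n" using j by (intro X_strict) auto
      thus False using j 3 by simp
    qed
    hence "L j x = 0" using L_at_next[OF j(1,2)] 3 Yn by simp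
    hence "y = 0" using j zU by simp
    thus ?thesis using 3 by simp
  next
    case 4
    have "\<not> (\<exists>k\<in>{1..<n}. L k x < y)" using zUW z 4 unfolding W_def by auto
    hence "y = L j x" using j by force
    moreover have "u \<in> {0..1}" if "u = (x - X j) / (X (Suc j) - X j)" for u
      using that j X_step[OF j(1,2)] by auto
    ultimately have "z \<in> closed_segment (P j) (P (Suc j))"
      using Lb(3) z seg_mem by auto
    thus ?thesis unfolding C_def using j by auto
  qed
qed

lemma frontier_U: "frontier U \<subseteq> C"
proof -
  have "W \<subseteq> interior U" using W_sub_U open_W by (rule interior_maximal)
  hence "frontier U \<subseteq> U - W" unfolding frontier_def using closed_U closure_closed by auto
  thus ?thesis using U_minus_W by blast
qed

end
context polyline
begin

lemma KK_sub_U: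
  assumes lower: "\<And>k. 1 \<le> k \<Longrightarrow> k \<le> n \<Longrightarrow> m \<le> sqrt (a * X k) + sqrt (- Y k)"
  shows "KK a m \<subseteq> U"
proof
  fix z assume zK: "z \<in> KK a m"
  obtain x y where z: "z = (x, y)" "y \<le> 0" "0 \<le> x" "sqrt (a * x) + sqrt (- y) \<le> m"
    using zK by (auto simp: KK_def)
  have sy: "sqrt (- y) \<ge> 0" using z by simp
  have "m \<le> sqrt (a * X n)" using lower[of n] n2 Yn by simp
  hence "sqrt (a * x) \<le> sqrt (a * X n)" using z(4) sy by linarith
  hence xn: "x \<le> X n" using apos by simp
  obtain j where j: "1 \<le> j" "j < n" "X j \<le> x" "x \<le> X (Suc j)" using exists_seg[OF z(3) xn] by blast
  define u where "u = (x - X j) / (X (Suc j) - X j)"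
  have u: "0 \<le> u" "u \<le> 1" unfolding u_def using j X_step[OF j(1,2)] by auto
  have e: "(x, L j x) = (1 - u) *\<^sub>R P j + u *\<^sub>R P (Suc j)" using L_between(3)[OF j] unfolding u_def .
  have ex: "x = (1 - u) * X j + u * X (Suc j)" using arg_cong[OF e, of fst] unfolding P_def by simp
  have eL: "L j x = (1 - u) * Y j + u * Y (Suc j)" using arg_cong[OF e, of snd] unfolding P_def by simp
  have Xj: "X j \<ge> 0" "X (Suc j) \<ge> 0" using j by (auto intro!: X_nonneg)
  have Yj: "Y j \<le> 0" "Y (Suc j) \<le> 0" using j by (auto intro!: Y_nonpos)
  have c1: "(1 - u) * sqrt (a * X j) + u * sqrt (a * X (Suc j)) \<le> sqrt (a * x)"
  proof -
    have "a * x = (1 - u) * (a * X j) + u * (a * X (Suc j))" unfolding ex by (simp add: algebra_simps)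
    thus ?thesis using sqrt_concave[of "a * X j" "a * X (Suc j)" u] Xj apos u by simp
  qed
  have c2: "(1 - u) * sqrt (- Y j) + u * sqrt (- Y (Suc j)) \<le> sqrt (- L j x)"
  proof -
    have "- L j x = (1 - u) * (- Y j) + u * (- Y (Suc j))" unfolding eL by (simp add: algebra_simps)
    thus ?thesis using sqrt_concave[of "- Y j" "- Y (Suc j)" u] Yj u by simp
  qed
  have l1: "m \<le> sqrt (a * X j) + sqrt (- Y j)" using lower[of j] j by simp
  have l2: "m \<le> sqrt (a * X (Suc j)) + sqrt (- Y (Suc j))" using lower[of "Suc j"] j by simp
  have "(1 - u) * m + u * m \<le> (1 - u) * (sqrt (a * X j) + sqrt (- Y j)) + u * (sqrt (a * X (Suc j)) + sqrt (- Y (Suc j)))"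
    using l1 l2 u by (intro add_mono mult_left_mono) auto
  hence "m \<le> sqrt (a * x) + sqrt (- L j x)" using c1 c2 by (simp add: algebra_simps)
  hence "sqrt (- y) \<le> sqrt (- L j x)" using z(4) by linarith
  hence "L j x \<le> y" by simp
  thus "z \<in> U" unfolding U_def using z xn j by auto
qed

lemma inner_incl:
  assumes lower: "\<And>k. 1 \<le> k \<Longrightarrow> k \<le> n \<Longrightarrow> m \<le> sqrt (a * X k) + sqrt (- Y k)"
  shows "KK a m \<subseteq> C \<union> inside C"
proof
  fix z assume zK: "z \<in> KK a m"
  show "z \<in> C \<union> inside C"
  proof (cases "z \<in> C")
    case False
    define S where "S = connected_component_set (- C) z"
    have zS: "z \<in> S" unfolding S_def using False by simp
    have cS: "connected S" unfolding S_def by simp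
    have SC: "S \<subseteq> - C" unfolding S_def by (rule connected_component_subset)
    have zU: "z \<in> U" using KK_sub_U[OF lower] zK by blast
    have "S \<subseteq> U"
    proof (rule ccontr)
      assume "\<not> S \<subseteq> U"
      hence "S - U \<noteq> {}" by blast
      moreover have "S \<inter> U \<noteq> {}" using zS zU by blast
      ultimately have "S \<inter> frontier U \<noteq> {}" using connected_Int_frontier[OF cS] by blast
      thus False using SC frontier_U by blast
    qed
    hence "bounded S" using bounded_U bounded_subset by blast
    thus ?thesis unfolding inside_def S_def using False by simp
  qed simp
qed

lemma C_sub_KK:
  assumes upper: "\<And>k. 1 \<le> k \<Longrightarrow> k < n \<Longrightarrow> sqrt (a * X (Suc k)) + sqrt (- Y k) \<le> T"
  shows "C \<subseteq> KK a T"
proof -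
  have s1: "closed_segment 0 (P 1) \<subseteq> KK a T"
  proof
    fix w assume "w \<in> closed_segment 0 (P 1)"
    then obtain u where u: "0 \<le> u" "u \<le> 1" "w = (1 - u) *\<^sub>R 0 + u *\<^sub>R P 1" by (auto simp: in_segment)
    hence w: "w = (0, u * Y 1)" unfolding P_def using X1 by simp
    have "(1 - u) * Y 1 \<le> 0" "u * Y 1 \<le> 0" using u Y1_neg by (auto intro!: mult_nonneg_nonpos)
    hence "Y 1 \<le> u * Y 1" "u * Y 1 \<le> 0" by (auto simp: algebra_simps)
    moreover have "0 \<le> X (Suc 1)" using n2 by (intro X_nonneg) auto
    ultimately show "w \<in> KK a T" unfolding w using upper[of 1] n2 apos by (intro in_KK_dom) auto
  qed
  have s2: "closed_segment (P n) 0 \<subseteq> KK a T"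
  proof
    fix w assume "w \<in> closed_segment (P n) 0"
    then obtain u where u: "0 \<le> u" "u \<le> 1" "w = (1 - u) *\<^sub>R P n + u *\<^sub>R 0" by (auto simp: in_segment)
    hence w: "w = ((1 - u) * X n, 0)" unfolding P_def using Yn by simp
    have b: "0 \<le> (1 - u) * X n" "(1 - u) * X n \<le> X n" using cvx_bounds[OF u(1,2), of 0 "X n"] Xn_pos
      by (auto simp: algebra_simps)
    have Suc: "Suc (n - 1) = n" using n2 by simp
    have "Y (n - 1) \<le> 0" using n2 by (intro Y_nonpos) auto
    moreover have "sqrt (a * X n) + sqrt (- Y (n - 1)) \<le> T" using upper[of "n - 1"] n2 Suc by simp
    ultimately show "w \<in> KK a T" unfolding w using b apos by (intro in_KK_dom) auto
  qed
  have s3: "closed_segment (P k) (P (k + 1)) \<subseteq> KK a T" if k: "k \<in> {1..<n}" for k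
  proof
    fix w assume "w \<in> closed_segment (P k) (P (k + 1))"
    then obtain u where u: "0 \<le> u" "u \<le> 1" "w = (1 - u) *\<^sub>R P k + u *\<^sub>R P (k + 1)" by (auto simp: in_segment)
    hence w: "w = ((1 - u) * X k + u * X (Suc k), (1 - u) * Y k + u * Y (Suc k))" unfolding P_def by simp
    have kk: "1 \<le> k" "k < n" using k by auto
    have bx: "X k \<le> (1 - u) * X k + u * X (Suc k)" "(1 - u) * X k + u * X (Suc k) \<le> X (Suc k)"
      using cvx_bounds[OF u(1,2), of "X k" "X (Suc k)"] X_step[OF kk] by auto
    have by': "Y k \<le> (1 - u) * Y k + u * Y (Suc k)" "(1 - u) * Y k + u * Y (Suc k) \<le> Y (Suc k)"
      using cvx_bounds[OF u(1,2), of "Y k" "Y (Suc k)"] Y_step[OF kk] by auto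
    have "X k \<ge> 0" "Y (Suc k) \<le> 0" using kk by (auto intro!: X_nonneg Y_nonpos)
    thus "w \<in> KK a T" unfolding w using bx by' upper[OF kk] apos by (intro in_KK_dom) auto
  qed
  show ?thesis unfolding C_def using s1 s2 s3 by blast
qed

lemma outer_incl:
  assumes upper: "\<And>k. 1 \<le> k \<Longrightarrow> k < n \<Longrightarrow> sqrt (a * X (Suc k)) + sqrt (- Y k) \<le> T"
  shows "C \<union> inside C \<subseteq> KK a T"
proof -
  have CK: "C \<subseteq> KK a T" by (rule C_sub_KK[OF upper])
  have T0: "T \<ge> 0"
  proof -
    have s: "sqrt (a * X (Suc 1)) \<ge> 0" "sqrt (- Y 1) \<ge> 0" using n2 Y_nonpos[of 1] X_nonneg[of "Suc 1"] apos by auto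
    have u1: "sqrt (a * X (Suc 1)) + sqrt (- Y 1) \<le> T" using upper[of 1] n2 by simp
    show ?thesis using s u1 by linarith
  qed
  have "inside C \<subseteq> KK a T - C"
    by (rule inside_subset[OF connected_compl_KK[OF apos T0]]) (use CK in auto)
  thus ?thesis using CK by blast
qed

end
lemma polyline_gamma:
  assumes "0 < p" "p < 1" "n \<ge> 2"
  shows "polyline n (1 - p) (XX n p) (YY n p) (DD n p)"
proof
  show "n \<ge> 2" "1 - p > 0" using assms by auto
  show "XX n p 1 = 0" unfolding XX_def by simp
  show "YY n p n = 0" unfolding YY_def by simp
  fix k assume k: "1 \<le> k" "k < n"
  show "XX n p (Suc k) - XX n p k = real k * DD n p k" by (rule XX_step[OF assms(1,2) k])
  show "YY n p (Suc k) - YY n p k = (real n - real k) * DD n p k" by (rule YY_step[OF assms(1,2) k])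
  show "DD n p k > 0" by (rule DD_pos[OF assms(1,2) k])
qed

lemma boundary_eq:
  assumes "0 < p" "p < 1" "n \<ge> 2"
  shows "boundary_curve n (gammavec n p) = polyline.C n (XX n p) (YY n p)"
proof -
  interpret polyline n "1 - p" "XX n p" "YY n p" "DD n p" by (rule polyline_gamma[OF assms])
  have r: "rpt n (gammavec n p) k = P k" if "1 \<le> k" "k \<le> n" for k
    unfolding P_def using rpt_eq[OF assms(1,2) that] .
  have "(\<Union>k\<in>{1..<n}. closed_segment (rpt n (gammavec n p) k) (rpt n (gammavec n p) (k + 1)))
      = (\<Union>k\<in>{1..<n}. closed_segment (P k) (P (k + 1)))"
    by (intro SUP_cong refl) (simp add: r)
  moreover have "rpt n (gammavec n p) 1 = P 1" "rpt n (gammavec n p) n = P n" using assms by (simp_all add: r)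
  ultimately show ?thesis unfolding boundary_curve_def C_def by simp
qed

lemma main_bounds:
  assumes "0 < p" "p < 1" "n \<ge> 2"
  shows "KK (1 - p) ((1 - 1 / (real n * (1 - p))) / sqrt (1 - p)) \<subseteq> Rring n (gammavec n p)"
    "Rring n (gammavec n p) \<subseteq> KK (1 - p) ((1 + 2 / (real n * (1 - p))) / sqrt (1 - p))"
    "Rring n (gammavec n p) \<in> sets lebesgue"
proof -
  interpret polyline n "1 - p" "XX n p" "YY n p" "DD n p" by (rule polyline_gamma[OF assms])
  have R: "Rring n (gammavec n p) = C \<union> inside C"
    unfolding Rring_def boundary_eq[OF assms] ..
  show "KK (1 - p) ((1 - 1 / (real n * (1 - p))) / sqrt (1 - p)) \<subseteq> Rring n (gammavec n p)"
    unfolding R by (rule inner_incl) (use lower_est[OF assms(1,2)] in auto)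
  show "Rring n (gammavec n p) \<subseteq> KK (1 - p) ((1 + 2 / (real n * (1 - p))) / sqrt (1 - p))"
    unfolding R by (rule outer_incl) (use upper_est[OF assms(1,2)] in auto)
  have "compact C" unfolding C_def
    by (intro compact_Un compact_UN finite_atLeastLessThan compact_segment)
  hence "open (inside C)" "closed C" by (auto intro: open_inside compact_imp_closed)
  hence "C \<union> inside C \<in> sets borel" by auto
  thus "Rring n (gammavec n p) \<in> sets lebesgue" unfolding R by (intro sets_completionI_sets) simp
qed


theorem proposition5p4:
  fixes p :: real
  assumes "0 < p" and "p < 1"
  shows "(\<lambda>n. hausdorff_dist (Rnorm n (gammavec n p)) (Rinf p)) \<longlonglongrightarrow> 0"
proof -
  define a where "a = 1 - p"
  have a: "a > 0" unfolding a_def using assms by simp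
  define c where "c = 1 / sqrt a"
  have c: "c > 0" unfolding c_def using a by simp
  define m where "m n = (1 - 1 / (real n * a)) / sqrt a" for n :: nat
  define T where "T n = (1 + 2 / (real n * a)) / sqrt a" for n :: nat
  define A where "A n = Area n (gammavec n p)" for n
  define cR where "cR = (6 * a) powr (1/4)"
  have cR: "cR > 0" unfolding cR_def using a by simp
  define Ainf where "Ainf = c^4 / (6 * a)"
  have Ainf: "Ainf > 0" unfolding Ainf_def using a c by simp
  have Rinf: "Rinf p = KK a cR" unfolding Rinf_def KK_def a_def cR_def ..
  have lim0: "(\<lambda>n. 1 / (real n * a)) \<longlonglongrightarrow> 0"
  proof -
    have "(\<lambda>n. (1 / a) * (1 / real n)) \<longlonglongrightarrow> (1 / a) * 0" by (intro tendsto_intros)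
    moreover have "(\<lambda>n. (1 / a) * (1 / real n)) = (\<lambda>n. 1 / (real n * a))" by (auto simp: fun_eq_iff)
    ultimately show ?thesis by simp
  qed
  have mlim: "m \<longlonglongrightarrow> c"
  proof -
    have "(\<lambda>n. (1 - 1 / (real n * a)) / sqrt a) \<longlonglongrightarrow> (1 - 0) / sqrt a"
      using a by (intro tendsto_intros lim0) auto
    thus ?thesis unfolding m_def c_def by simp
  qed
  have Tlim: "T \<longlonglongrightarrow> c"
  proof -
    have "(\<lambda>n. (1 + 2 * (1 / (real n * a))) / sqrt a) \<longlonglongrightarrow> (1 + 2 * 0) / sqrt a"
      using a by (intro tendsto_intros lim0) auto
    thus ?thesis unfolding T_def c_def by simp
  qed
  define N where "N = nat (ceiling (2 / a)) + 2"
  have EV: "eventually (\<lambda>n. n \<ge> 2 \<and> real n * a > 2) sequentially"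
    unfolding eventually_sequentially
  proof (intro exI[of _ N] allI impI)
    fix n assume n: "N \<le> n"
    have "real n \<ge> 2 / a + 1" using n unfolding N_def by linarith
    hence "real n * a \<ge> (2 / a + 1) * a" using a by (intro mult_right_mono) auto
    also have "(2 / a + 1) * a = 2 + a" using a by (simp add: field_simps)
    finally show "n \<ge> 2 \<and> real n * a > 2" using n a unfolding N_def by auto
  qed
  have props: "m n > 0 \<and> KK a (m n) \<subseteq> Rring n (gammavec n p) \<and> Rring n (gammavec n p) \<subseteq> KK a (T n)
      \<and> m n ^ 4 / (6 * a) \<le> A n \<and> A n \<le> T n ^ 4 / (6 * a)"
    if n: "n \<ge> 2" "real n * a > 2" for n
  proof -
    have "1 / (real n * a) < 1" using n by simp
    hence mpos: "m n > 0" unfolding m_def using a by simp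
    have Tpos: "T n > 0"
    proof -
      have "2 / (real n * a) > 0" using n a by (intro divide_pos_pos) auto
      hence "1 + 2 / (real n * a) > 0" by linarith
      thus ?thesis unfolding T_def by (rule divide_pos_pos) (use a in simp)
    qed
    note mb = main_bounds[OF assms n(1), folded a_def, folded m_def T_def]
    have R: "Rring n (gammavec n p) \<in> fmeasurable lebesgue"
      using mb(2,3) bounded_KK[OF a] by (intro bounded_set_imp_lmeasurable) (auto intro: bounded_subset)
    have "measure lebesgue (KK a (m n)) \<le> A n" unfolding A_def Area_def
      using mb(1) measure_KK(2)[OF a, of "m n"] mpos R by (intro measure_mono_fmeasurable) auto
    moreover have "A n \<le> measure lebesgue (KK a (T n))" unfolding A_def Area_def
      using mb(2) measure_KK(2)[OF a, of "T n"] Tpos mb(3) by (intro measure_mono_fmeasurable) auto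
    ultimately show ?thesis using mb(1,2) mpos measure_KK(1)[OF a] Tpos by auto
  qed
  have Alim: "A \<longlonglongrightarrow> Ainf"
  proof (rule tendsto_sandwich)
    show "eventually (\<lambda>n. m n ^ 4 / (6 * a) \<le> A n) sequentially" using EV props by (auto elim: eventually_mono)
    show "eventually (\<lambda>n. A n \<le> T n ^ 4 / (6 * a)) sequentially" using EV props by (auto elim: eventually_mono)
    show "(\<lambda>n. m n ^ 4 / (6 * a)) \<longlonglongrightarrow> Ainf" unfolding Ainf_def by (intro tendsto_intros mlim) (use a in simp)
    show "(\<lambda>n. T n ^ 4 / (6 * a)) \<longlonglongrightarrow> Ainf" unfolding Ainf_def by (intro tendsto_intros Tlim) (use a in simp)
  qed
  define s where "s n = 1 / sqrt (A n)" for n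
  define Lc where "Lc = sqrt (1 / sqrt Ainf) * c"
  have slim: "(\<lambda>n. sqrt (s n)) \<longlonglongrightarrow> sqrt (1 / sqrt Ainf)"
    unfolding s_def using Ainf by (intro tendsto_intros Alim) auto
  have alim: "(\<lambda>n. sqrt (s n) * m n) \<longlonglongrightarrow> Lc" unfolding Lc_def by (intro tendsto_intros slim mlim)
  have blim: "(\<lambda>n. sqrt (s n) * T n) \<longlonglongrightarrow> Lc" unfolding Lc_def by (intro tendsto_intros slim Tlim)
  have Lc2: "Lc^2 = cR^2"
  proof -
    have sq: "sqrt (1 / sqrt Ainf) ^ 2 = 1 / sqrt Ainf" using Ainf by simp
    have c2: "c^2 = 1 / a" unfolding c_def using a by (simp add: power_divide)
    have "sqrt Ainf * sqrt (6 * a) = sqrt (c^4)" unfolding Ainf_def using a by (simp add: real_sqrt_mult[symmetric])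
    also have "sqrt (c^4) = c^2"
    proof -
      have "c^4 = (c^2)^2" by (simp flip: power_mult)
      hence "sqrt (c^4) = \<bar>c^2\<bar>" using real_sqrt_abs[of "c^2"] by simp
      thus ?thesis by simp
    qed
    finally have e: "sqrt Ainf * sqrt (6 * a) = c^2" .
    have "Lc^2 = c^2 / sqrt Ainf" unfolding Lc_def power_mult_distrib sq by simp
    also have "\<dots> = sqrt (6 * a)" using e Ainf by (simp add: field_simps)
    also have "\<dots> = cR^2" unfolding cR_def using a
      by (simp add: power2_eq_square powr_add[symmetric] powr_half_sqrt)
    finally show ?thesis .
  qed
  define B where "B n = (1 + 1/a) * (\<bar>(sqrt (s n) * T n)^2 - cR^2\<bar> + \<bar>(sqrt (s n) * m n)^2 - cR^2\<bar>)" for n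
  have Blim: "B \<longlonglongrightarrow> (1 + 1/a) * (\<bar>Lc^2 - cR^2\<bar> + \<bar>Lc^2 - cR^2\<bar>)"
    unfolding B_def by (intro tendsto_intros alim blim)
  hence Blim0: "B \<longlonglongrightarrow> 0" using Lc2 by simp
  have "eventually (\<lambda>n. norm (hausdorff_dist (Rnorm n (gammavec n p)) (Rinf p)) \<le> B n) sequentially"
    using EV
  proof (rule eventually_mono)
    fix n assume n: "n \<ge> 2 \<and> real n * a > 2"
    have pr: "m n > 0" "KK a (m n) \<subseteq> Rring n (gammavec n p)" "Rring n (gammavec n p) \<subseteq> KK a (T n)"
      "m n ^ 4 / (6 * a) \<le> A n" using props n by auto
    have Tpos: "T n > 0"
    proof -
      have "2 / (real n * a) > 0" using n a by (intro divide_pos_pos) auto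
      hence "1 + 2 / (real n * a) > 0" by linarith
      thus ?thesis unfolding T_def by (rule divide_pos_pos) (use a in simp)
    qed
    have Apos: "A n > 0" using pr(1,4) a by (smt (verit) divide_pos_pos zero_less_power)
    have spos: "s n > 0" unfolding s_def using Apos by simp
    have Rn: "Rnorm n (gammavec n p) = (\<lambda>z. s n *\<^sub>R z) ` Rring n (gammavec n p)"
      unfolding Rnorm_def s_def A_def ..
    have i1: "KK a (sqrt (s n) * m n) \<subseteq> Rnorm n (gammavec n p)"
      unfolding Rn KK_scale[OF spos, symmetric] using pr(2) by blast
    have i2: "Rnorm n (gammavec n p) \<subseteq> KK a (sqrt (s n) * T n)"
      unfolding Rn KK_scale[OF spos, symmetric] using pr(3) by blast
    show "norm (hausdorff_dist (Rnorm n (gammavec n p)) (Rinf p)) \<le> B n"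
      unfolding Rinf B_def real_norm_def
      by (rule hausdorff_sandwich[OF a _ _ cR i1 i2]) (use spos pr(1) Tpos in auto)
  qed
  thus ?thesis using Blim0 by (rule Lim_null_comparison)
qed

end
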